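(* Let $A$ be an $m\times m$ coloring matrix and $B=(b_{pq})$ an $m'\times m$ matrix with entries in $\{0,1\}$. Let $A'$ be the $(m+m')\times(m+m')$ block matrix $$A'=\left[\begin{array}{c|c}A&0\\\hline B&0\end{array}\right].$$ Then for every $1\le i\le m$, $F_{A'}^{(i)}(x)=F_A^{(i)}(x)$, and for every $m+1\le i\le m+m'$, $$F_{A'}^{(i)}(x)=\frac{x}{1-\sum_{j=1}^m b_{i-m,j}F_A^{(j)}(x)}.$$
   Context: A plane tree is an unlabeled rooted tree in which the children of every vertex are linearly ordered. A coloring matrix is a square matrix $A=(a_{ij})$ with entries in $\{0,1\}$. An $A$-coloring of a plane tree assigns to each vertex a color (an index of a row of $A$) such that whenever a vertex of color $j$ is a child of a vertex of color $i$, $a_{ij}=1$. Let $t_A^{(i)}(n)$ be the number of pairs (plane tree with $n$ vertices, $A$-coloring of it) in which the root has color $i$, and $F_A^{(i)}(x)=\sum_{n\ge1}t_A^{(i)}(n)x^n$ (formal power series). *)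

theory Defs
  imports "HOL-Computational_Algebra.Formal_Power_Series"
begin

text \<open>A pair (plane tree, colouring of its vertices) is represented as a plane tree
  whose vertices carry a natural-number label (the colour).\<close>
datatype ctree = CNode nat "ctree list"

fun nverts :: "ctree \<Rightarrow> nat" where
  "nverts (CNode c ts) = 1 + sum_list (map nverts ts)"

fun root_color :: "ctree \<Rightarrow> nat" where
  "root_color (CNode c ts) = c"

fun is_coloring :: "nat \<Rightarrow> (nat \<Rightarrow> nat \<Rightarrow> nat) \<Rightarrow> ctree \<Rightarrow> bool" where
  "is_coloring m A (CNode c ts) =
     (c \<in> {1..m} \<and> (\<forall>t\<in>set ts. A c (root_color t) = 1 \<and> is_coloring m A t))"

definition tcount :: "nat \<Rightarrow> (nat \<Rightarrow> nat \<Rightarrow> nat) \<Rightarrow> nat \<Rightarrow> nat \<Rightarrow> nat" where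
  "tcount m A i n = card {t. is_coloring m A t \<and> root_color t = i \<and> nverts t = n}"

definition genF :: "nat \<Rightarrow> (nat \<Rightarrow> nat \<Rightarrow> nat) \<Rightarrow> nat \<Rightarrow> rat fps" where
  "genF m A i = Abs_fps (\<lambda>n. if n \<ge> 1 then of_nat (tcount m A i n) else 0)"

end

theory Submission
  imports Defs
begin

unbundle fps_syntax

definition ext_mat :: "(nat \<Rightarrow> nat \<Rightarrow> nat) \<Rightarrow> (nat \<Rightarrow> nat \<Rightarrow> nat) \<Rightarrow> nat \<Rightarrow> nat \<Rightarrow> nat \<Rightarrow> nat" where
  "ext_mat A B m p q = (if q \<le> m then (if p \<le> m then A p q else B (p - m) q) else 0)"

lemma nverts_pos: "nverts t \<ge> 1"
  by (cases t) auto

lemma nverts_gt0 [simp]: "0 < nverts t" and nverts_ne0 [simp]: "nverts t \<noteq> 0"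
  using nverts_pos[of t] by auto

lemma length_le_sum: "length ts \<le> sum_list (map nverts ts)"
proof (induction ts)
  case (Cons a ts)
  then show ?case using nverts_pos[of a] by simp
qed simp

lemma col_root: "is_coloring M A t \<Longrightarrow> root_color t \<in> {1..M}"
  by (cases t) auto

lemma fin_col: "finite {t. is_coloring M A t \<and> nverts t \<le> n}"
proof (induction n)
  case 0
  have "{t. is_coloring M A t \<and> nverts t \<le> 0} = {}" by auto
  then show ?case by simp
next
  case (Suc n)
  let ?S = "{t. is_coloring M A t \<and> nverts t \<le> n}"
  have "{t. is_coloring M A t \<and> nverts t \<le> Suc n} \<subseteq>
        (\<lambda>(c,ts). CNode c ts) ` ({1..M} \<times> {ts. set ts \<subseteq> ?S \<and> length ts \<le> n})"
  proof
    fix t assume t: "t \<in> {t. is_coloring M A t \<and> nverts t \<le> Suc n}"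
    obtain c ts where tc: "t = CNode c ts" by (cases t)
    have s: "sum_list (map nverts ts) \<le> n" using t tc by simp
    have "length ts \<le> n" using length_le_sum[of ts] s by simp
    moreover have "set ts \<subseteq> ?S"
    proof
      fix x assume x: "x \<in> set ts"
      have "nverts x \<le> sum_list (map nverts ts)"
        using x by (simp add: member_le_sum_list)
      then show "x \<in> ?S" using s x t tc by auto
    qed
    moreover have "c \<in> {1..M}" using t tc by simp
    ultimately show "t \<in> (\<lambda>(c,ts). CNode c ts) ` ({1..M} \<times> {ts. set ts \<subseteq> ?S \<and> length ts \<le> n})"
      using tc by auto
  qed
  moreover have "finite ({1..M} \<times> {ts. set ts \<subseteq> ?S \<and> length ts \<le> n})"
    using Suc.IH by (intro finite_cartesian_product finite_lists_length_le) auto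
  ultimately show ?case by (meson finite_imageI finite_subset)
qed

lemma col_ext: "root_color t \<in> {1..m} \<Longrightarrow> is_coloring (m+m') (ext_mat A B m) t = is_coloring m A t"
proof (induction t)
  case (CNode c ts)
  have c: "c \<in> {1..m}" using CNode.prems by simp
  have "\<forall>x\<in>set ts. (ext_mat A B m c (root_color x) = 1 \<and> is_coloring (m+m') (ext_mat A B m) x)
           = (A c (root_color x) = 1 \<and> is_coloring m A x)"
  proof
    fix x assume x: "x \<in> set ts"
    show "(ext_mat A B m c (root_color x) = 1 \<and> is_coloring (m+m') (ext_mat A B m) x)
           = (A c (root_color x) = 1 \<and> is_coloring m A x)"
    proof (cases "root_color x \<in> {1..m}")
      case True
      have "ext_mat A B m c (root_color x) = A c (root_color x)" using True c by (simp add: ext_mat_def)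
      then show ?thesis using CNode.IH[OF x True] by simp
    next
      case False
      then show ?thesis using col_root[of m A x] col_root[of "m+m'" "ext_mat A B m" x]
        by (auto simp: ext_mat_def)
    qed
  qed
  then show ?case using c by auto
qed

fun cons_child :: "ctree \<Rightarrow> ctree \<Rightarrow> ctree" where
  "cons_child t (CNode c ts) = CNode c (t # ts)"

lemma cons_child_inj: "inj (\<lambda>(t,u). cons_child t u)"
proof (rule injI, clarsimp)
  fix a b a' b' assume "cons_child a b = cons_child a' b'"
  then show "a = a' \<and> b = b'" by (cases b; cases b') auto
qed

lemma genF_nth: "genF M A i $ n = of_nat (tcount M A i n)"
proof -
  have "tcount M A i 0 = 0"
    unfolding tcount_def by auto
  then show ?thesis by (cases n) (auto simp: genF_def)
qed

theorem theorem24: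
  fixes m m' :: nat and A B :: "nat \<Rightarrow> nat \<Rightarrow> nat"
  assumes "\<forall>i\<in>{1..m}. \<forall>j\<in>{1..m}. A i j \<in> {0, 1}"
      and "\<forall>p\<in>{1..m'}. \<forall>q\<in>{1..m}. B p q \<in> {0, 1}"
  shows "(\<forall>i\<in>{1..m}.
            genF (m + m') (\<lambda>p q. if q \<le> m then (if p \<le> m then A p q else B (p - m) q) else 0) i
            = genF m A i)
       \<and> (\<forall>i\<in>{m+1..m+m'}.
            genF (m + m') (\<lambda>p q. if q \<le> m then (if p \<le> m then A p q else B (p - m) q) else 0) i
            = fps_X / (1 - (\<Sum>j=1..m. of_nat (B (i - m) j) * genF m A j)))"
proof -
  define E where "E = ext_mat A B m"
  have Eeq: "(\<lambda>p q. if q \<le> m then (if p \<le> m then A p q else B (p - m) q) else 0) = E"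
    by (simp add: E_def ext_mat_def fun_eq_iff)
  have part1: "genF (m + m') E i = genF m A i" if i: "i \<in> {1..m}" for i
  proof -
    have "tcount (m+m') E i n = tcount m A i n" for n
      unfolding tcount_def E_def using col_ext[of _ m m' A B] i by metis
    then show ?thesis by (simp add: fps_eq_iff genF_nth)
  qed
  have part2: "genF (m + m') E i = fps_X / (1 - (\<Sum>j=1..m. of_nat (B (i - m) j) * genF m A j))"
    if i: "i \<in> {m+1..m+m'}" for i
  proof -
    define b where "b = B (i - m)"
    define Bs where "Bs = {j\<in>{1..m}. b j = 1}"
    define T where "T n = {t. is_coloring (m+m') E t \<and> root_color t = i \<and> nverts t = n}" for n
    define P where "P k = {t. is_coloring m A t \<and> root_color t \<in> Bs \<and> nverts t = k}" for k
    define G where "G = genF (m + m') E i"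
    define S where "S = (\<Sum>j=1..m. of_nat (b j) * genF m A j :: rat fps)"
    have b01: "b j \<in> {0,1}" if "j \<in> {1..m}" for j
    proof -
      have "i - m \<in> {1..m'}" using i by auto
      then show ?thesis using assms(2) that unfolding b_def by blast
    qed
    have finT: "finite (T n)" for n
      by (rule finite_subset[OF _ fin_col[of "m+m'" E n]]) (auto simp: T_def)
    have finP: "finite (P n)" for n
      by (rule finite_subset[OF _ fin_col[of m A n]]) (auto simp: P_def)
    have Gn: "G $ n = of_nat (card (T n))" for n
      by (simp add: G_def genF_nth tcount_def T_def)
    have cardP: "card (P k) = (\<Sum>j\<in>Bs. tcount m A j k)" for k
    proof -
      have "P k = (\<Union>j\<in>Bs. {t. is_coloring m A t \<and> root_color t = j \<and> nverts t = k})"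
        by (auto simp: P_def)
      moreover have "card (\<Union>j\<in>Bs. {t. is_coloring m A t \<and> root_color t = j \<and> nverts t = k})
          = (\<Sum>j\<in>Bs. card {t. is_coloring m A t \<and> root_color t = j \<and> nverts t = k})"
        by (rule card_UN_disjoint)
          (auto simp: Bs_def intro: finite_subset[OF _ fin_col[of m A k]])
      ultimately show ?thesis by (simp add: tcount_def)
    qed
    have Sn: "S $ k = of_nat (card (P k))" for k
    proof -
      have "S $ k = (\<Sum>j=1..m. of_nat (b j) * of_nat (tcount m A j k))"
        by (simp add: S_def fps_sum_nth genF_nth)
      also have "\<dots> = (\<Sum>j=1..m. if b j = 1 then of_nat (tcount m A j k) else 0)"
        by (rule sum.cong) (use b01 in auto)
      also have "\<dots> = (\<Sum>j\<in>Bs. of_nat (tcount m A j k))"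
        unfolding Bs_def by (rule sum.inter_filter[symmetric]) simp
      finally show ?thesis by (simp add: cardP)
    qed
    have T0: "T 0 = {}" by (auto simp: T_def)
    have P0: "P 0 = {}" by (auto simp: P_def)
    have T1: "T 1 = {CNode i []}"
    proof
      show "{CNode i []} \<subseteq> T 1" using i by (auto simp: T_def)
      show "T 1 \<subseteq> {CNode i []}"
      proof
        fix t assume t: "t \<in> T 1"
        obtain c ts where tc: "t = CNode c ts" by (cases t)
        have "length ts \<le> 0" using length_le_sum[of ts] t tc by (simp add: T_def)
        then show "t \<in> {CNode i []}" using t tc by (simp add: T_def)
      qed
    qed
    have Tn: "T n = (\<lambda>(t,u). cons_child t u) ` (\<Union>k\<in>{0..n}. P k \<times> T (n-k))" if n: "n \<ge> 2" for n
    proof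
      show "T n \<subseteq> (\<lambda>(t,u). cons_child t u) ` (\<Union>k\<in>{0..n}. P k \<times> T (n-k))"
      proof
        fix t assume t: "t \<in> T n"
        obtain c ts where tc: "t = CNode c ts" by (cases t)
        have "ts \<noteq> []" using t tc n by (auto simp: T_def)
        then obtain x xs where xs: "ts = x # xs" by (cases ts) auto
        have ci: "c = i" using t tc by (simp add: T_def)
        have colx: "is_coloring (m+m') E x" and ex: "E i (root_color x) = 1"
          and colxs: "\<forall>y\<in>set xs. E i (root_color y) = 1 \<and> is_coloring (m+m') E y"
          using t tc xs ci by (auto simp: T_def)
        have rx: "root_color x \<in> {1..m}" and bx: "b (root_color x) = 1"
          using ex col_root[OF colx] i by (auto simp: E_def ext_mat_def b_def split: if_splits)
        have "is_coloring m A x" using colx col_ext[OF rx, of m' A B] by (simp add: E_def)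
        then have xP: "x \<in> P (nverts x)" using rx bx by (simp add: P_def Bs_def)
        have uT: "CNode i xs \<in> T (n - nverts x)"
          using colxs i t tc xs ci by (auto simp: T_def)
        have "nverts x \<le> n" using t tc xs by (auto simp: T_def)
        then have "(x, CNode i xs) \<in> (\<Union>k\<in>{0..n}. P k \<times> T (n-k))" using xP uT by auto
        moreover have "t = (\<lambda>(t,u). cons_child t u) (x, CNode i xs)" using tc xs ci by simp
        ultimately show "t \<in> (\<lambda>(t,u). cons_child t u) ` (\<Union>k\<in>{0..n}. P k \<times> T (n-k))" by blast
      qed
      show "(\<lambda>(t,u). cons_child t u) ` (\<Union>k\<in>{0..n}. P k \<times> T (n-k)) \<subseteq> T n"
      proof clarify
        fix k x u assume k: "k \<in> {0..n}" and x: "x \<in> P k" and u: "u \<in> T (n - k)"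
        obtain c ts where uc: "u = CNode c ts" by (cases u)
        have rx: "root_color x \<in> {1..m}" and bx: "b (root_color x) = 1" and colx: "is_coloring m A x"
          and nx: "nverts x = k"
          using x by (auto simp: P_def Bs_def)
        have colx': "is_coloring (m+m') E x" using colx col_ext[OF rx, of m' A B] by (simp add: E_def)
        have ex: "E i (root_color x) = 1" using rx bx i by (simp add: E_def ext_mat_def b_def)
        have "nverts u \<ge> 1" by (rule nverts_pos)
        then show "cons_child x u \<in> T n"
          using u uc colx' ex nx k by (auto simp: T_def)
      qed
    qed
    have cardTn: "card (T n) = (\<Sum>k=0..n. card (P k) * card (T (n-k)))" if n: "n \<ge> 2" for n
    proof -
      have "card (T n) = card (\<Union>k\<in>{0..n}. P k \<times> T (n-k))"
        unfolding Tn[OF n] by (rule card_image) (rule inj_on_subset[OF cons_child_inj], simp)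
      also have "\<dots> = (\<Sum>k=0..n. card (P k \<times> T (n-k)))"
        by (rule card_UN_disjoint) (use finP finT in \<open>auto simp: P_def\<close>)
      finally show ?thesis by (simp add: card_cartesian_product)
    qed
    have GS: "G = fps_X + S * G"
    proof (rule fps_ext)
      fix n
      show "G $ n = (fps_X + S * G) $ n"
      proof (cases "n \<ge> 2")
        case True
        then show ?thesis
          by (simp add: Gn Sn cardTn fps_mult_nth fps_X_def)
      next
        case False
        then consider "n = 0" | "n = 1" by linarith
        then show ?thesis
        proof cases
          case 1 then show ?thesis by (simp add: Gn Sn fps_mult_nth T0 P0)
        next
          case 2 then show ?thesis by (simp add: Gn Sn fps_mult_nth T0 P0 T1[simplified])
        qed
      qed
    qed
    have X: "G * (1 - S) = fps_X" using GS by (simp add: algebra_simps)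
    have ne: "1 - S \<noteq> 0"
    proof
      assume "1 - S = 0"
      then have "(1 - S) $ 0 = 0" by simp
      then show False by (simp add: Sn P0)
    qed
    have "fps_X / (1 - S) = G" unfolding X[symmetric] using ne by simp
    then show ?thesis by (simp add: G_def S_def b_def)
  qed
  show ?thesis unfolding Eeq using part1 part2 by blast
qed

end
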